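(* Let $G$ be a finite simple graph that has a $C_3$-free vertex $x$ (i.e. $x$ is non-isolated and lies in no triangle of $G$). Then $G$ is not a universal fixer; that is, there exists a permutation $\pi$ of $V(G)$ such that $\gamma(\pi G)\neq\gamma(G)$.
   Context: For a graph $G$, a set $D\subseteq V(G)$ is dominating if every vertex not in $D$ has a neighbor in $D$; $\gamma(G)$ is the minimum size of a dominating set. Let $G'$ be a disjoint copy of $G$, the copy of $v\in V(G)$ being denoted $v'$. For a bijection $\pi:V(G)\to V(G')$ (equivalently a permutation of $V(G)$), the prism $\pi G$ is the graph with vertex set $V(G)\cup V(G')$ and edge set $E(G)\cup E(G')\cup\{u\pi(u):u\in V(G)\}$. The graph $G$ is a universal fixer if $\gamma(\pi G)=\gamma(G)$ for every bijection $\pi:V(G)\to V(G')$. A non-isolated vertex is $C_3$-free if it belongs to no triangle of $G$. *)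

theory Defs
  imports Main
begin

definition simple_graph :: "'a set \<Rightarrow> ('a \<Rightarrow> 'a \<Rightarrow> bool) \<Rightarrow> bool" where
  "simple_graph V E \<longleftrightarrow> finite V \<and> (\<forall>u v. E u v \<longrightarrow> u \<in> V \<and> v \<in> V)
     \<and> (\<forall>u v. E u v \<longrightarrow> E v u) \<and> (\<forall>v. \<not> E v v)"

definition dominating :: "'a set \<Rightarrow> ('a \<Rightarrow> 'a \<Rightarrow> bool) \<Rightarrow> 'a set \<Rightarrow> bool" where
  "dominating V E D \<longleftrightarrow> D \<subseteq> V \<and> (\<forall>v\<in>V - D. \<exists>u\<in>D. E v u)"

definition domination_number :: "'a set \<Rightarrow> ('a \<Rightarrow> 'a \<Rightarrow> bool) \<Rightarrow> nat" where
  "domination_number V E = Min (card ` {D. dominating V E D})"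

text \<open>The prism \<pi>G: vertices Inl v (the copy G) and Inr v (the copy G', Inr v = v'),
edges of G in both copies plus the matching u -- \<pi>(u)'.\<close>
definition prism_vertices :: "'a set \<Rightarrow> ('a + 'a) set" where
  "prism_vertices V = Inl ` V \<union> Inr ` V"

fun prism_edge :: "('a \<Rightarrow> 'a \<Rightarrow> bool) \<Rightarrow> ('a \<Rightarrow> 'a) \<Rightarrow> ('a + 'a) \<Rightarrow> ('a + 'a) \<Rightarrow> bool" where
  "prism_edge E \<pi> (Inl u) (Inl v) = E u v"
| "prism_edge E \<pi> (Inr u) (Inr v) = E u v"
| "prism_edge E \<pi> (Inl u) (Inr v) = (v = \<pi> u)"
| "prism_edge E \<pi> (Inr v) (Inl u) = (v = \<pi> u)"

definition universal_fixer :: "'a set \<Rightarrow> ('a \<Rightarrow> 'a \<Rightarrow> bool) \<Rightarrow> bool" where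
  "universal_fixer V E \<longleftrightarrow> (\<forall>\<pi>. bij_betw \<pi> V V \<longrightarrow>
     domination_number (prism_vertices V) (prism_edge E \<pi>) = domination_number V E)"

definition C3_free_vertex :: "'a set \<Rightarrow> ('a \<Rightarrow> 'a \<Rightarrow> bool) \<Rightarrow> 'a \<Rightarrow> bool" where
  "C3_free_vertex V E x \<longleftrightarrow> x \<in> V \<and> (\<exists>y. E x y) \<and> (\<nexists>y z. E x y \<and> E y z \<and> E x z)"

end

theory Submission
  imports Defs "HOL-Combinatorics.Cycles"
begin
lemma dom_num_le:
  assumes "finite V" "dominating V E D"
  shows "domination_number V E \<le> card D"
proof -
  have "finite {D. dominating V E D}"
    using assms(1) by (rule finite_subset[rotated, OF finite_Pow_iff[THEN iffD2]]) (auto simp: dominating_def)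
  then show ?thesis unfolding domination_number_def using assms(2) by (auto intro!: Min_le)
qed

lemma dom_num_ex:
  assumes "finite V"
  shows "\<exists>D. dominating V E D \<and> card D = domination_number V E"
proof -
  have fin: "finite {D. dominating V E D}"
    using assms(1) by (rule finite_subset[rotated, OF finite_Pow_iff[THEN iffD2]]) (auto simp: dominating_def)
  have "dominating V E V" by (simp add: dominating_def)
  then have "card ` {D. dominating V E D} \<noteq> {}" by auto
  from Min_in[OF finite_imageI[OF fin] this] show ?thesis
    unfolding domination_number_def by auto
qed

lemma core:
  fixes V :: "'a set" and E p x A B
  assumes sym: "\<And>u v. E u v \<Longrightarrow> E v u"
    and irr: "\<And>v. \<not> E v v"
    and indep: "\<And>y z. E x y \<Longrightarrow> E x z \<Longrightarrow> \<not> E y z"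
    and inj: "inj p"
    and pC: "\<And>v. p v \<in> insert x {v. E x v} \<longleftrightarrow> v \<in> insert x {v. E x v}"
    and pout: "\<And>v. v \<notin> insert x {v. E x v} \<Longrightarrow> p v = v"
    and px: "E x (p x)"
    and wN: "E x w" and pw: "p w = x"
    and orbit: "\<And>T. x \<in> T \<Longrightarrow> (\<forall>u\<in>T. p u \<in> T) \<Longrightarrow> insert x {v. E x v} \<subseteq> T"
    and disj: "A \<inter> B = {}"
    and C1: "\<And>u. u \<in> insert x {v. E x v} \<Longrightarrow> u \<notin> A \<union> B \<Longrightarrow> \<exists>a\<in>A. E u a"
    and C2: "\<And>u. u \<in> insert x {v. E x v} \<Longrightarrow> u \<notin> A \<union> B \<Longrightarrow> \<exists>b\<in>B. E (p u) (p b)"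
    and C3: "\<And>b s. b \<in> B \<Longrightarrow> s \<in> A \<union> B \<Longrightarrow> \<not> E b s"
    and C4: "\<And>a s. a \<in> A \<Longrightarrow> s \<in> A \<union> B \<Longrightarrow> \<not> E (p a) (p s)"
  shows False
proof -
  define C where "C = insert x {v. E x v}"
  have pC': "\<And>v. p v \<in> C \<longleftrightarrow> v \<in> C" using pC unfolding C_def .
  have pout': "\<And>v. v \<notin> C \<Longrightarrow> p v = v" using pout unfolding C_def .
  consider "x \<in> B" | "x \<in> A" | "x \<notin> A \<union> B" by blast
  then show False
  proof cases
    case 1
    have "p x \<notin> A \<union> B" using C3[OF 1] px by blast
    then obtain a where a: "a \<in> A" "E (p x) a" using C1 px by blast
    have "a \<noteq> x" using a 1 disj by blast
    have "a \<notin> C"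
    proof
      assume "a \<in> C"
      then have "E x a" using \<open>a \<noteq> x\<close> unfolding C_def by auto
      then show False using indep[OF px] a(2) by blast
    qed
    then have "p a = a" by (rule pout')
    then show False using C4[OF a(1), of x] 1 a(2) sym by auto
  next
    case 2
    note xA = 2
    consider "w \<in> B" | "w \<in> A" | "w \<notin> A \<union> B" by blast
    then show False
    proof cases
      case 1 then show ?thesis using C3[OF 1, of x] xA wN sym by auto
    next
      case 3
      then obtain b where b: "b \<in> B" "E (p w) (p b)" using C2 wN by blast
      then have "E x (p b)" using pw by simp
      then have "p b \<in> C" unfolding C_def by auto
      then have "b \<in> C" using pC' by simp
      moreover have "b \<noteq> x" using b xA disj by blast
      ultimately have "E x b" unfolding C_def by auto
      then show ?thesis using C3[OF b(1), of x] xA sym by auto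
    next
      case 2
      show ?thesis using C4[OF 2, of x] xA pw px by auto
    qed
  next
    case 3
    obtain a0 where a0: "a0 \<in> A" "E x a0" using C1[OF _ 3] sym by blast
    show False
    proof (cases "w \<in> B")
      case True
      have "p a0 \<noteq> x" using pw True a0 disj inj by (metis disjoint_iff injD)
      moreover have "p a0 \<in> C" using pC' a0 unfolding C_def by auto
      ultimately have "E x (p a0)" unfolding C_def by auto
      then show False using C4[OF a0(1), of w] True pw sym by auto
    next
      case False
      define T where "T = C - (A \<union> B)"
      have "x \<in> T" using 3 unfolding T_def C_def by auto
      moreover have "\<forall>u\<in>T. p u \<in> T"
      proof
        fix u assume u: "u \<in> T"
        have puC: "p u \<in> C" using u pC' unfolding T_def by auto
        show "p u \<in> T"
        proof (cases "p u = x")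
          case True then show ?thesis using 3 puC unfolding T_def by auto
        next
          case pux: False
          then have Epu: "E x (p u)" using puC unfolding C_def by auto
          obtain b where b: "b \<in> B" "E (p u) (p b)" using C2 u unfolding T_def C_def by blast
          have "p b \<notin> C"
          proof
            assume "p b \<in> C"
            moreover have "p b \<noteq> x" using pw False b(1) inj by (metis injD)
            ultimately have "E x (p b)" unfolding C_def by auto
            then show False using indep[OF Epu] b(2) by blast
          qed
          then have "b \<notin> C" using pC' by blast
          then have "p b = b" by (rule pout')
          then have "p u \<notin> A \<union> B" using C3[OF b(1), of "p u"] b(2) sym by auto
          then show ?thesis using puC unfolding T_def by auto
        qed
      qed
      ultimately have "C \<subseteq> T" using orbit unfolding C_def by blast
      moreover have "a0 \<in> C" using a0 unfolding C_def by auto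
      ultimately show False using a0 unfolding T_def by auto
    qed
  qed
qed

lemma prism_conditions:
  fixes V :: "'a set" and E p
  assumes G: "simple_graph V E"
    and bij: "bij_betw p V V"
    and eq: "domination_number (prism_vertices V) (prism_edge E p) = domination_number V E"
  shows "\<exists>A B. A \<subseteq> V \<and> B \<subseteq> V \<and> A \<inter> B = {} \<and>
     (\<forall>u\<in>V. u \<notin> A \<union> B \<longrightarrow> (\<exists>a\<in>A. E u a)) \<and>
     (\<forall>u\<in>V. u \<notin> A \<union> B \<longrightarrow> (\<exists>b\<in>B. E (p u) (p b))) \<and>
     (\<forall>b\<in>B. \<forall>s\<in>A \<union> B. \<not> E b s) \<and>
     (\<forall>a\<in>A. \<forall>s\<in>A \<union> B. \<not> E (p a) (p s))"
proof -
  have finV: "finite V" and Ein: "\<And>u v. E u v \<Longrightarrow> u \<in> V \<and> v \<in> V"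
    and irr: "\<And>v. \<not> E v v"
    using G unfolding simple_graph_def by auto
  have injp: "inj_on p V" and imgp: "p ` V = V" using bij by (auto simp: bij_betw_def)
  define g where "g = domination_number V E"
  have finP: "finite (prism_vertices V)" using finV by (simp add: prism_vertices_def)
  obtain D where D: "dominating (prism_vertices V) (prism_edge E p) D" "card D = g"
    using dom_num_ex[OF finP, of "prism_edge E p"] eq unfolding g_def by auto
  have finD: "finite D" using D(1) finP by (auto simp: dominating_def intro: finite_subset)
  define A where "A = {v\<in>V. Inl v \<in> D}"
  define B where "B = {v\<in>V. Inr (p v) \<in> D}"
  define S where "S = A \<union> B"
  have AV: "A \<subseteq> V" and BV: "B \<subseteq> V" by (auto simp: A_def B_def)
  have finA: "finite A" "finite B" using AV BV finV by (auto intro: finite_subset)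
  have "Inl ` A \<union> Inr ` (p ` B) \<subseteq> D" by (auto simp: A_def B_def)
  moreover have "card (Inl ` A \<union> Inr ` (p ` B) :: ('a + 'a) set) = card A + card B"
  proof -
    have "card (Inl ` A \<union> Inr ` (p ` B)) = card (Inl ` A :: ('a + 'a) set) + card (Inr ` (p ` B) :: ('a + 'a) set)"
      using finA by (subst card_Un_disjoint) auto
    also have "\<dots> = card A + card B"
      using card_image[of "Inl :: 'a \<Rightarrow> 'a + 'a" A] card_image[of "Inr :: 'a \<Rightarrow> 'a + 'a" "p ` B"] card_image[OF inj_on_subset[OF injp BV]]
      by (simp add: inj_on_def)
    finally show ?thesis .
  qed
  ultimately have cardAB: "card A + card B \<le> g" using card_mono[OF finD] D(2) by metis
  have C1: "\<exists>a\<in>A. E u a" if "u \<in> V" "u \<notin> S" for u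
  proof -
    have "Inl u \<in> prism_vertices V - D" using that by (auto simp: prism_vertices_def A_def S_def)
    then obtain d where d: "d \<in> D" "prism_edge E p (Inl u) d" using D(1) unfolding dominating_def by blast
    show ?thesis
    proof (cases d)
      case (Inl a)
      then show ?thesis using d Ein by (auto simp: A_def)
    next
      case (Inr w)
      then show ?thesis using d that by (auto simp: B_def S_def)
    qed
  qed
  have C2: "\<exists>b\<in>B. E (p u) (p b)" if "u \<in> V" "u \<notin> S" for u
  proof -
    have "Inr (p u) \<in> prism_vertices V - D" using that imgp by (auto simp: prism_vertices_def B_def S_def)
    then obtain d where d: "d \<in> D" "prism_edge E p (Inr (p u)) d" using D(1) unfolding dominating_def by blast
    show ?thesis
    proof (cases d)
      case (Inl a)
      then have "p u = p a" "Inl a \<in> D" using d by auto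
      moreover have "a \<in> V" using \<open>Inl a \<in> D\<close> D(1) by (auto simp: dominating_def prism_vertices_def)
      ultimately have "u = a" using injp that(1) by (auto dest: inj_onD)
      then show ?thesis using \<open>Inl a \<in> D\<close> that by (auto simp: A_def S_def)
    next
      case (Inr w)
      then have "w \<in> V" using d Ein by auto
      then obtain b where "b \<in> V" "w = p b" using imgp by auto
      then show ?thesis using d Inr by (auto simp: B_def)
    qed
  qed
  have SV: "S \<subseteq> V" using AV BV by (auto simp: S_def)
  have domS: "dominating V E S" unfolding dominating_def using SV C1 by (auto simp: S_def)
  have finS: "finite S" using SV finV by (auto intro: finite_subset)
  have "g \<le> card S" using dom_num_le[OF finV domS] by (simp add: g_def)
  moreover have "card S + card (A \<inter> B) = card A + card B" using card_Un_Int[OF finA] by (simp add: S_def)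
  ultimately have c0: "card (A \<inter> B) = 0" and cardS: "card S = g"
    using cardAB by linarith+
  have disj: "A \<inter> B = {}" using c0 finA by simp
  have C3: "\<not> E b s" if "b \<in> B" "s \<in> S" for b s
  proof
    assume Ebs: "E b s"
    have "dominating V E (S - {b})"
      unfolding dominating_def
    proof (intro conjI ballI)
      show "S - {b} \<subseteq> V" using SV by auto
    next
      fix v assume v: "v \<in> V - (S - {b})"
      show "\<exists>u\<in>S - {b}. E v u"
      proof (cases "v = b")
        case True then show ?thesis using Ebs that irr by (metis DiffI singletonD)
      next
        case False
        then have "v \<notin> S" using v by auto
        then obtain a where "a \<in> A" "E v a" using C1 v by auto
        moreover have "a \<noteq> b" using \<open>a \<in> A\<close> that disj by auto
        ultimately show ?thesis by (auto simp: S_def)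
      qed
    qed
    then have "g \<le> card (S - {b})" using dom_num_le[OF finV] by (simp add: g_def)
    moreover have "card (S - {b}) = g - 1" using cardS that finS by (simp add: S_def)
    moreover have "g \<ge> 1" using cardS that finS by (metis S_def UnI2 card_0_eq empty_iff less_one not_le)
    ultimately show False by simp
  qed
  have C4: "\<not> E (p a) (p s)" if "a \<in> A" "s \<in> S" for a s
  proof
    assume Eas: "E (p a) (p s)"
    have aV: "a \<in> V" using that AV by auto
    have "dominating V E (p ` S - {p a})"
      unfolding dominating_def
    proof (intro conjI ballI)
      show "p ` S - {p a} \<subseteq> V" using SV imgp by auto
    next
      fix v assume v: "v \<in> V - (p ` S - {p a})"
      show "\<exists>u\<in>p ` S - {p a}. E v u"
      proof (cases "v = p a")
        case True then show ?thesis using Eas that irr by (metis DiffI image_eqI singletonD)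
      next
        case False
        then have "v \<notin> p ` S" using v by auto
        obtain u where u: "u \<in> V" "v = p u" using v imgp by (metis DiffD1 imageE)
        then have "u \<notin> S" using \<open>v \<notin> p ` S\<close> by auto
        then obtain b where b: "b \<in> B" "E (p u) (p b)" using C2 u by auto
        have "b \<noteq> a" using b that disj by auto
        then have "p b \<noteq> p a" using injp b(1) BV aV by (auto dest: inj_onD)
        then show ?thesis using b u by (auto simp: S_def)
      qed
    qed
    then have "g \<le> card (p ` S - {p a})" using dom_num_le[OF finV] by (simp add: g_def)
    moreover have "card (p ` S) = g" using cardS card_image[OF inj_on_subset[OF injp SV]] by simp
    moreover have "p a \<in> p ` S" using that by (auto simp: S_def)
    moreover have "finite (p ` S)" using finS by simp
    ultimately show False by (simp add: card_Diff_singleton) (metis One_nat_def card_gt_0_iff diff_less empty_iff less_numeral_extra(1) not_le)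
  qed
  show ?thesis
    apply (rule exI[of _ A], rule exI[of _ B])
    using AV BV disj C1 C2 C3 C4 by (auto simp: S_def)
qed

theorem theorem2:
  fixes V :: "'a set" and E :: "'a \<Rightarrow> 'a \<Rightarrow> bool" and x :: 'a
  assumes "simple_graph V E"
    and "C3_free_vertex V E x"
  shows "\<not> universal_fixer V E"
proof
  assume uf: "universal_fixer V E"
  have finV: "finite V" and Ein: "\<And>u v. E u v \<Longrightarrow> u \<in> V \<and> v \<in> V"
    and sym: "\<And>u v. E u v \<Longrightarrow> E v u" and irr: "\<And>v. \<not> E v v"
    using assms(1) unfolding simple_graph_def by auto
  have xV: "x \<in> V" and exy: "\<exists>y. E x y" and noT: "\<And>y z. E x y \<Longrightarrow> E y z \<Longrightarrow> E x z \<Longrightarrow> False"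
    using assms(2) unfolding C3_free_vertex_def by auto
  have indep: "\<And>y z. E x y \<Longrightarrow> E x z \<Longrightarrow> \<not> E y z" using noT by blast
  define N where "N = {v. E x v}"
  have NV: "N \<subseteq> V" using Ein by (auto simp: N_def)
  have finN: "finite N" using NV finV by (rule finite_subset)
  obtain ys where ys: "set ys = N" "distinct ys" using finite_distinct_list[OF finN] by blast
  have ysne: "ys \<noteq> []" using ys(1) exy by (auto simp: N_def)
  then obtain y ys' where ysc: "ys = y # ys'" by (cases ys) auto
  define cs where "cs = x # ys"
  have xN: "x \<notin> N" using irr by (auto simp: N_def)
  have dcs: "distinct cs" using ys xN by (simp add: cs_def)
  have setcs: "set cs = insert x N" using ys by (simp add: cs_def)
  define p where "p = cycle_of_list cs"
  have perm: "p permutes (insert x N)" unfolding p_def using cycle_permutes[of cs] setcs by simp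
  have permV: "p permutes V" using permutes_subset[OF perm] NV xV by auto
  have bij: "bij_betw p V V" using permutes_imp_bij[OF permV] .
  have rot: "map (p ^^ n) cs = rotate n cs" for n
    unfolding p_def using cyclic_rotation[OF dcs] .
  have "map p cs = rotate1 cs" using rot[of 1] by simp
  then have m: "p x = y" "map p ys = ys' @ [x]" by (auto simp: cs_def ysc)
  define w where "w = last ys"
  have pw: "p w = x"
  proof -
    have "last (map p ys) = x" using m(2) by simp
    then show ?thesis using last_map[OF ysne, of p] by (simp add: w_def)
  qed
  have wN: "E x w" using ys(1) ysne by (auto simp: w_def N_def)
  have px: "E x (p x)" using m(1) ys(1) ysc by (auto simp: N_def)
  have orbit: "insert x N \<subseteq> T" if T: "x \<in> T" "\<forall>u\<in>T. p u \<in> T" for T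
  proof
    fix c assume c: "c \<in> insert x N"
    have it: "(p ^^ n) x \<in> T" for n by (induction n) (use T in auto)
    obtain i where i: "i < length cs" "cs ! i = c" using c setcs by (metis in_set_conv_nth)
    have "(p ^^ i) x = map (p ^^ i) cs ! 0" by (simp add: cs_def)
    also have "\<dots> = rotate i cs ! 0" using rot by simp
    also have "\<dots> = cs ! i" using i nth_rotate[of 0 cs i] by (simp add: cs_def)
    finally show "c \<in> T" using it i by metis
  qed
  have eq: "domination_number (prism_vertices V) (prism_edge E p) = domination_number V E"
    using uf bij unfolding universal_fixer_def by blast
  obtain A B where AB: "A \<subseteq> V" "B \<subseteq> V" "A \<inter> B = {}"
     "\<forall>u\<in>V. u \<notin> A \<union> B \<longrightarrow> (\<exists>a\<in>A. E u a)"
     "\<forall>u\<in>V. u \<notin> A \<union> B \<longrightarrow> (\<exists>b\<in>B. E (p u) (p b))"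
     "\<forall>b\<in>B. \<forall>s\<in>A \<union> B. \<not> E b s"
     "\<forall>a\<in>A. \<forall>s\<in>A \<union> B. \<not> E (p a) (p s)"
    using prism_conditions[OF assms(1) bij eq] by blast
  have CV: "\<And>u. u \<in> insert x {v. E x v} \<Longrightarrow> u \<in> V" using NV xV by (auto simp: N_def)
  show False
  proof (rule core[of E x p w A B])
    show "inj p" using permutes_inj[OF perm] .
    show "p v \<in> insert x {v. E x v} \<longleftrightarrow> v \<in> insert x {v. E x v}" for v
      using permutes_in_image[OF perm] by (simp add: N_def)
    show "p v = v" if "v \<notin> insert x {v. E x v}" for v
      using permutes_not_in[OF perm] that by (simp add: N_def)
    show "insert x {v. E x v} \<subseteq> T" if "x \<in> T" "\<forall>u\<in>T. p u \<in> T" for T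
      using orbit[OF that] by (simp add: N_def)
    show "\<And>u v. E u v \<Longrightarrow> E v u" by (rule sym)
    show "\<And>v. \<not> E v v" by (rule irr)
    show "\<And>y z. E x y \<Longrightarrow> E x z \<Longrightarrow> \<not> E y z" by (rule indep)
    show "E x (p x)" by (rule px)
    show "E x w" by (rule wN)
    show "p w = x" by (rule pw)
    show "A \<inter> B = {}" by (rule AB(3))
    show "\<exists>a\<in>A. E u a" if "u \<in> insert x {v. E x v}" "u \<notin> A \<union> B" for u
      using AB(4) CV[OF that(1)] that(2) by blast
    show "\<exists>b\<in>B. E (p u) (p b)" if "u \<in> insert x {v. E x v}" "u \<notin> A \<union> B" for u
      using AB(5) CV[OF that(1)] that(2) by blast
    show "\<not> E b s" if "b \<in> B" "s \<in> A \<union> B" for b s using AB(6) that by blast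
    show "\<not> E (p a) (p s)" if "a \<in> A" "s \<in> A \<union> B" for a s using AB(7) that by blast
  qed
qed

end
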